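(* Let $l\geq 1$ and let $c_1,\dots,c_l$ and $d_1,\dots,d_l$ be positive integers. Let $u$ be a vertex of a graph $G$ such that $G$ contains a path $P_{\max\{c_1,\dots,c_l\}+1}$ as a proper subgraph, with $u$ as one of its end vertices. Let $P_{d_1+1},\dots,P_{d_l+1}$ be paths that are mutually vertex-disjoint and vertex-disjoint from $G$, and let $v_i$ be an end vertex of $P_{d_i+1}$ for $i=1,\dots,l$. Then for every $k\geq 0$, $$M_k\big(G(u=v_1)P_{d_1+1}\cdots(u=v_l)P_{d_l+1}\big)\geq M_k(G)+\sum_{i=1}^l\left(M_k(P_{c_i+d_i+1})-M_k(P_{c_i+1})\right).$$
   Context: $P_m$ denotes the path on $m$ vertices. $M_k(H)$ is the number of closed walks of length $k$ in a graph $H$. The coalescence $G(u=v)H$ of vertex-disjoint graphs $G$ and $H$ with respect to a vertex $u$ of $G$ and a vertex $v$ of $H$ is obtained from the disjoint union by identifying $u$ and $v$; $G(u=v_1)P_{d_1+1}\cdots(u=v_l)P_{d_l+1}$ denotes the graph obtained from the disjoint union of $G,P_{d_1+1},\dots,P_{d_l+1}$ by identifying $u,v_1,\dots,v_l$ into a single vertex (i.e. attaching all the paths at $u$ by an end vertex). *)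

theory Defs
  imports Main
begin

definition simple_graph :: "'a set \<Rightarrow> ('a \<Rightarrow> 'a \<Rightarrow> bool) \<Rightarrow> bool" where
  "simple_graph V E \<longleftrightarrow> finite V \<and> (\<forall>x y. E x y \<longrightarrow> x \<in> V \<and> y \<in> V)
     \<and> (\<forall>x y. E x y \<longrightarrow> E y x) \<and> (\<forall>x. \<not> E x x)"

definition closed_walks :: "'a set \<Rightarrow> ('a \<Rightarrow> 'a \<Rightarrow> bool) \<Rightarrow> nat \<Rightarrow> 'a list set" where
  "closed_walks V E k = {w. length w = Suc k \<and> set w \<subseteq> V
      \<and> (\<forall>i<k. E (w ! i) (w ! Suc i)) \<and> w ! k = w ! 0}"

definition M :: "nat \<Rightarrow> 'a set \<Rightarrow> ('a \<Rightarrow> 'a \<Rightarrow> bool) \<Rightarrow> nat" where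
  "M k V E = card (closed_walks V E k)"

definition path_V :: "nat \<Rightarrow> nat set" where
  "path_V m = {0..<m}"

definition path_E :: "nat \<Rightarrow> nat \<Rightarrow> nat \<Rightarrow> bool" where
  "path_E m i j \<longleftrightarrow> i < m \<and> j < m \<and> (j = Suc i \<or> i = Suc j)"

definition M_path :: "nat \<Rightarrow> nat \<Rightarrow> nat" where
  "M_path k m = M k (path_V m) (path_E m)"

text \<open>G contains the path xs!0 - xs!1 - ... - xs!c (a copy of P_{c+1}) as a subgraph,
  with end vertex u = xs!0, and this subgraph is not all of G.\<close>
definition has_proper_end_path :: "'a set \<Rightarrow> ('a \<Rightarrow> 'a \<Rightarrow> bool) \<Rightarrow> 'a \<Rightarrow> nat \<Rightarrow> bool" where
  "has_proper_end_path V E u c \<longleftrightarrow> (\<exists>xs. length xs = Suc c \<and> distinct xs \<and> set xs \<subseteq> V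
      \<and> xs ! 0 = u \<and> (\<forall>j<c. E (xs ! j) (xs ! Suc j))
      \<and> \<not> (set xs = V \<and> (\<forall>a b. E a b \<longrightarrow> (\<exists>j<c. {a, b} = {xs ! j, xs ! Suc j}))))"

text \<open>Coalescence G(u=v_1)P_{d_1+1}...(u=v_l)P_{d_l+1}: the vertex u is the common end
  vertex of all attached paths; the remaining vertices of the i-th path are Inr (i, j),
  1 <= j <= d i, where j is the distance from u along that path.\<close>
definition coal_V :: "'a set \<Rightarrow> nat \<Rightarrow> (nat \<Rightarrow> nat) \<Rightarrow> ('a + nat \<times> nat) set" where
  "coal_V V l d = Inl ` V \<union> {Inr (i, j) | i j. 1 \<le> i \<and> i \<le> l \<and> 1 \<le> j \<and> j \<le> d i}"

fun coal_E :: "('a \<Rightarrow> 'a \<Rightarrow> bool) \<Rightarrow> 'a \<Rightarrow> nat \<Rightarrow> (nat \<Rightarrow> nat)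
    \<Rightarrow> ('a + nat \<times> nat) \<Rightarrow> ('a + nat \<times> nat) \<Rightarrow> bool" where
  "coal_E E u l d (Inl a) (Inl b) = E a b"
| "coal_E E u l d (Inl a) (Inr (i, j)) = (a = u \<and> 1 \<le> i \<and> i \<le> l \<and> j = 1 \<and> 1 \<le> d i)"
| "coal_E E u l d (Inr (i, j)) (Inl a) = (a = u \<and> 1 \<le> i \<and> i \<le> l \<and> j = 1 \<and> 1 \<le> d i)"
| "coal_E E u l d (Inr (i, j)) (Inr (i', j')) = (i = i' \<and> 1 \<le> i \<and> i \<le> l
      \<and> 1 \<le> j \<and> j \<le> d i \<and> 1 \<le> j' \<and> j' \<le> d i \<and> (j' = Suc j \<or> j = Suc j'))"

end

theory Submission
  imports Defs
begin

lemma cw_finite: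
  assumes "finite V" shows "finite (closed_walks V E k)"
proof -
  have "closed_walks V E k \<subseteq> {xs. set xs \<subseteq> V \<and> length xs = Suc k}"
    unfolding closed_walks_def by auto
  moreover have "finite {xs. set xs \<subseteq> V \<and> length xs = Suc k}"
    using finite_lists_length_eq[OF assms] by blast
  ultimately show ?thesis by (rule finite_subset)
qed

lemma cw_map:
  assumes "\<And>x. x \<in> V \<Longrightarrow> f x \<in> V'"
    and "\<And>a b. a \<in> V \<Longrightarrow> b \<in> V \<Longrightarrow> E a b \<Longrightarrow> E' (f a) (f b)"
    and "w \<in> closed_walks V E k"
  shows "map f w \<in> closed_walks V' E' k"
proof -
  have w: "length w = Suc k" "set w \<subseteq> V" "\<forall>i<k. E (w ! i) (w ! Suc i)" "w ! k = w ! 0"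
    using assms(3) unfolding closed_walks_def by auto
  have "set (map f w) \<subseteq> V'" using w(2) assms(1) by auto
  moreover have "\<forall>i<k. E' (map f w ! i) (map f w ! Suc i)"
  proof (intro allI impI)
    fix i assume i: "i < k"
    have "w ! i \<in> V" "w ! Suc i \<in> V" using w(1,2) i nth_mem[of i w] nth_mem[of "Suc i" w] by auto
    then show "E' (map f w ! i) (map f w ! Suc i)" using assms(2) w(3) i w(1) by simp
  qed
  moreover have "map f w ! k = map f w ! 0" using w by simp
  ultimately show ?thesis using w(1) unfolding closed_walks_def by simp
qed

lemma cw_inj_map:
  assumes "inj_on f V"
  shows "inj_on (map f) (closed_walks V E k)"
proof (rule inj_onI)
  fix w1 w2 assume "w1 \<in> closed_walks V E k" "w2 \<in> closed_walks V E k" "map f w1 = map f w2"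
  then have "set w1 \<union> set w2 \<subseteq> V" "map f w1 = map f w2" unfolding closed_walks_def by auto
  then show "w1 = w2" using inj_on_map_eq_map inj_on_subset[OF assms] by metis
qed

lemma cw_card_map:
  assumes "inj_on f V"
  shows "card (map f ` closed_walks V E k) = card (closed_walks V E k)"
  using cw_inj_map[OF assms] by (rule card_image)

lemma path_sub:
  "closed_walks (path_V (c + 1)) (path_E (c + 1)) k \<subseteq> closed_walks (path_V (c + d + 1)) (path_E (c + d + 1)) k"
proof
  fix w assume "w \<in> closed_walks (path_V (c + 1)) (path_E (c + 1)) k"
  then have "map id w \<in> closed_walks (path_V (c + d + 1)) (path_E (c + d + 1)) k"
    by (rule cw_map[rotated 2]) (auto simp: path_V_def path_E_def)
  then show "w \<in> closed_walks (path_V (c + d + 1)) (path_E (c + d + 1)) k" by simp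
qed

lemma path_diff:
  assumes "w \<in> closed_walks (path_V (c + d + 1)) (path_E (c + d + 1)) k - closed_walks (path_V (c + 1)) (path_E (c + 1)) k"
  shows "\<exists>x\<in>set w. c < x \<and> x < c + d + 1"
proof (rule ccontr)
  assume na: "\<not> ?thesis"
  have w: "length w = Suc k" "set w \<subseteq> {0..<c+d+1}" "\<forall>i<k. path_E (c+d+1) (w ! i) (w ! Suc i)" "w ! k = w ! 0"
    using assms unfolding closed_walks_def path_V_def by auto
  have s: "set w \<subseteq> {0..<c+1}" using na w(2) by fastforce
  have "\<forall>i<k. path_E (c+1) (w ! i) (w ! Suc i)"
  proof (intro allI impI)
    fix i assume i: "i < k"
    have "w ! i \<in> set w" "w ! Suc i \<in> set w" using w(1) i by auto
    then show "path_E (c+1) (w ! i) (w ! Suc i)" using s w(3) i unfolding path_E_def by auto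
  qed
  then have "w \<in> closed_walks (path_V (c + 1)) (path_E (c + 1)) k"
    using w s unfolding closed_walks_def path_V_def by auto
  then show False using assms by auto
qed

lemma coal_E_sym:
  assumes "\<And>a b. E a b \<Longrightarrow> E b a"
  shows "coal_E E u l d x y \<Longrightarrow> coal_E E u l d y x"
  using assms by (cases x; cases y) auto

definition phi :: "'a list \<Rightarrow> nat \<Rightarrow> nat \<Rightarrow> nat \<Rightarrow> ('a + nat \<times> nat)" where
  "phi xs c i m = (if m \<le> c then Inl (xs ! (c - m)) else Inr (i, m - c))"

lemma phi_set: "y \<in> set (map (phi xs c i) w) \<Longrightarrow> (\<exists>a. y = Inl a) \<or> (\<exists>j. y = Inr (i, j))"
  by (auto simp: phi_def)

lemma phi_big: "x \<in> set w \<Longrightarrow> c < x \<Longrightarrow> Inr (i, x - c) \<in> set (map (phi xs c i) w)"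
  by (force simp: phi_def)


theorem corollary1:
  fixes V :: "'a set" and E :: "'a \<Rightarrow> 'a \<Rightarrow> bool" and u :: 'a
    and l :: nat and c d :: "nat \<Rightarrow> nat" and k :: nat
  assumes "simple_graph V E"
    and "l \<ge> 1"
    and "\<forall>i\<in>{1..l}. c i > 0 \<and> d i > 0"
    and "has_proper_end_path V E u (Max (c ` {1..l}))"
  shows "int (M k (coal_V V l d) (coal_E E u l d)) \<ge>
           int (M k V E) + (\<Sum>i=1..l. int (M_path k (c i + d i + 1)) - int (M_path k (c i + 1)))"
proof -
  define cm where "cm = Max (c ` {1..l})"
  obtain xs where xs: "length xs = Suc cm" "distinct xs" "set xs \<subseteq> V" "xs ! 0 = u"
    "\<forall>j<cm. E (xs ! j) (xs ! Suc j)"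
    using assms(4) unfolding has_proper_end_path_def cm_def by blast
  have fV: "finite V" and Esym: "\<And>a b. E a b \<Longrightarrow> E b a" and EV: "\<And>a b. E a b \<Longrightarrow> a \<in> V \<and> b \<in> V"
    using assms(1) unfolding simple_graph_def by auto
  have ccm: "c i \<le> cm" if "i \<in> {1..l}" for i unfolding cm_def using that by simp
  define HV where "HV = coal_V V l d"
  define HE where "HE = coal_E E u l d"
  define CW where "CW = closed_walks HV HE k"
  define B where "B i = closed_walks (path_V (c i + d i + 1)) (path_E (c i + d i + 1)) k" for i
  define S where "S i = closed_walks (path_V (c i + 1)) (path_E (c i + 1)) k" for i
  define A where "A i = map (phi xs (c i) i) ` (B i - S i)" for i
  define A0 :: "('a + nat \<times> nat) list set" where "A0 = map Inl ` closed_walks V E k"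
  have fHV: "finite HV"
  proof -
    have "{Inr (i, j) | i j. 1 \<le> i \<and> i \<le> l \<and> 1 \<le> j \<and> j \<le> d i} \<subseteq> (\<lambda>(i,j). Inr (i,j)) ` ({1..l} \<times> {1..Max (d ` {1..l})})"
    proof
      fix y assume "y \<in> {Inr (i, j) | i j. 1 \<le> i \<and> i \<le> l \<and> 1 \<le> j \<and> j \<le> d i}"
      then obtain i j where "y = Inr (i, j)" "1 \<le> i" "i \<le> l" "1 \<le> j" "j \<le> d i" by blast
      moreover have "d i \<le> Max (d ` {1..l})" using \<open>1 \<le> i\<close> \<open>i \<le> l\<close> by simp
      ultimately show "y \<in> (\<lambda>(i,j). Inr (i,j)) ` ({1..l} \<times> {1..Max (d ` {1..l})})"
        by (metis (no_types, lifting) atLeastAtMost_iff case_prod_conv le_trans mem_Sigma_iff rev_image_eqI)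
    qed
    then have "finite {Inr (i, j) | i j. 1 \<le> i \<and> i \<le> l \<and> 1 \<le> j \<and> j \<le> d i}"
      by (rule finite_subset) simp
    then show ?thesis unfolding HV_def coal_V_def using fV by simp
  qed
  have fCW: "finite CW" unfolding CW_def using cw_finite[OF fHV] .
  have A0sub: "A0 \<subseteq> CW" unfolding A0_def CW_def HV_def HE_def
    by (auto intro!: cw_map[where V=V and E=E] simp: coal_V_def)
  have cA0: "card A0 = M k V E" unfolding A0_def M_def by (rule cw_card_map) simp
  have SB: "S i \<subseteq> B i" for i unfolding S_def B_def by (rule path_sub)
  have fS: "finite (S i)" for i unfolding S_def by (rule cw_finite) (simp add: path_V_def)
  have phiV: "phi xs (c i) i m \<in> HV" if "i \<in> {1..l}" "m \<in> path_V (c i + d i + 1)" for i m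
  proof (cases "m \<le> c i")
    case True
    then have "c i - m < length xs" using ccm[OF that(1)] xs(1) by simp
    then have "xs ! (c i - m) \<in> V" using xs(3) nth_mem by blast
    then show ?thesis using True unfolding phi_def HV_def coal_V_def by simp
  next
    case False
    then show ?thesis using that unfolding phi_def HV_def coal_V_def path_V_def by auto
  qed
  have phiE1: "HE (phi xs (c i) i m) (phi xs (c i) i (Suc m))"
    if "i \<in> {1..l}" "Suc m < c i + d i + 1" for i m
  proof -
    consider "Suc m \<le> c i" | "m = c i" | "c i < m" by linarith
    then show ?thesis
    proof cases
      case 1
      have "c i - Suc m < cm" using 1 ccm[OF that(1)] by simp
      then have "E (xs ! (c i - Suc m)) (xs ! Suc (c i - Suc m))" using xs(5) by blast
      moreover have "Suc (c i - Suc m) = c i - m" using 1 by simp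
      ultimately have "E (xs ! (c i - m)) (xs ! (c i - Suc m))" using Esym by metis
      then show ?thesis using 1 unfolding phi_def HE_def by simp
    next
      case 2
      have "d i > 0" using that(1) assms(3) by blast
      then show ?thesis using 2 that xs(4) unfolding phi_def HE_def by auto
    next
      case 3
      then show ?thesis using that unfolding phi_def HE_def by auto
    qed
  qed
  have phiE: "HE (phi xs (c i) i a) (phi xs (c i) i b)"
    if "i \<in> {1..l}" "a \<in> path_V (c i + d i + 1)" "b \<in> path_V (c i + d i + 1)"
      "path_E (c i + d i + 1) a b" for i a b
  proof -
    from that(4) have "b = Suc a \<or> a = Suc b" "a < c i + d i + 1" "b < c i + d i + 1"
      unfolding path_E_def by auto
    moreover have "\<And>x y. HE x y \<Longrightarrow> HE y x" unfolding HE_def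
      by (rule coal_E_sym[where E=E]) (use Esym in blast)
    ultimately show ?thesis using phiE1[OF that(1)] by blast
  qed
  have phiinj: "inj_on (phi xs (c i) i) (path_V (c i + d i + 1))" if "i \<in> {1..l}" for i
  proof (rule inj_onI)
    fix a b assume ab: "a \<in> path_V (c i + d i + 1)" "b \<in> path_V (c i + d i + 1)"
      "phi xs (c i) i a = phi xs (c i) i b"
    show "a = b"
    proof (cases "a \<le> c i \<and> b \<le> c i")
      case True
      then have "xs ! (c i - a) = xs ! (c i - b)" using ab(3) unfolding phi_def by simp
      moreover have "c i - a < length xs" "c i - b < length xs" using ccm[OF that] xs(1) by auto
      ultimately have "c i - a = c i - b" using xs(2) nth_eq_iff_index_eq by blast
      then show ?thesis using True by linarith
    next
      case False
      then show ?thesis using ab(3) unfolding phi_def by (auto split: if_splits)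
    qed
  qed
  have Asub: "A i \<subseteq> CW" if "i \<in> {1..l}" for i
    unfolding A_def CW_def B_def
    by (auto intro!: cw_map[where V="path_V (c i + d i + 1)" and E="path_E (c i + d i + 1)"] phiV[OF that] phiE[OF that])
  have cA: "card (A i) = card (B i) - card (S i)" if "i \<in> {1..l}" for i
  proof -
    have "inj_on (map (phi xs (c i) i)) (B i)"
      using cw_inj_map[OF phiinj[OF that]] unfolding B_def .
    then have "card (A i) = card (B i - S i)" unfolding A_def
      by (intro card_image) (rule inj_on_subset, auto)
    also have "\<dots> = card (B i) - card (S i)" using card_Diff_subset[OF fS SB] .
    finally show ?thesis .
  qed
  have disj0: "A0 \<inter> A i = {}" if "i \<in> {1..l}" for i
  proof -
    have "False" if wB: "w \<in> B i - S i" "map (phi xs (c i) i) w = map Inl w'" for w w'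
    proof -
      obtain x where "x \<in> set w" "c i < x" using path_diff[of w] wB(1) unfolding B_def S_def by blast
      then have "Inr (i, x - c i) \<in> set (map (phi xs (c i) i) w)" by (rule phi_big)
      then show False using wB(2) by auto
    qed
    then show ?thesis unfolding A0_def A_def by (auto simp del: map_eq_conv) (metis)
  qed
  have disj: "A i \<inter> A j = {}" if "i \<in> {1..l}" "j \<in> {1..l}" "i \<noteq> j" for i j
  proof -
    have "False" if wB: "w \<in> B i - S i" "map (phi xs (c i) i) w = map (phi xs (c j) j) w'" for w w'
    proof -
      obtain x where "x \<in> set w" "c i < x" using path_diff[of w] wB(1) unfolding B_def S_def by blast
      then have "Inr (i, x - c i) \<in> set (map (phi xs (c j) j) w')" using phi_big wB(2) by metis
      then show False using phi_set \<open>i \<noteq> j\<close> by fastforce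
    qed
    then show ?thesis unfolding A_def by (auto simp del: map_eq_conv)
  qed
  have fA: "finite (A i)" if "i \<in> {1..l}" for i using Asub[OF that] fCW finite_subset by blast
  have fA0: "finite A0" using A0sub fCW finite_subset by blast
  have "card (A0 \<union> (\<Union>i\<in>{1..l}. A i)) = card A0 + card (\<Union>i\<in>{1..l}. A i)"
    by (rule card_Un_disjoint) (use fA0 fA disj0 in blast)+
  also have "card (\<Union>i\<in>{1..l}. A i) = (\<Sum>i=1..l. card (A i))"
    by (rule card_UN_disjoint) (use fA disj in auto)
  finally have eq: "card (A0 \<union> (\<Union>i\<in>{1..l}. A i)) = card A0 + (\<Sum>i=1..l. card (A i))" .
  have "card (A0 \<union> (\<Union>i\<in>{1..l}. A i)) \<le> card CW"
    by (rule card_mono[OF fCW]) (use A0sub Asub in blast)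
  then have le: "M k V E + (\<Sum>i=1..l. card (A i)) \<le> M k HV HE"
    using eq cA0 unfolding M_def CW_def by simp
  have "(\<Sum>i=1..l. int (M_path k (c i + d i + 1)) - int (M_path k (c i + 1))) = (\<Sum>i=1..l. int (card (A i)))"
  proof (rule sum.cong)
    fix i assume i: "i \<in> {1..l}"
    have "card (S i) \<le> card (B i)" 
    proof (rule card_mono[OF _ SB])
      show "finite (B i)" unfolding B_def by (rule cw_finite) (simp add: path_V_def)
    qed
    then show "int (M_path k (c i + d i + 1)) - int (M_path k (c i + 1)) = int (card (A i))"
      using cA[OF i] unfolding M_path_def M_def B_def S_def by simp
  qed simp
  moreover have "int (M k V E) + (\<Sum>i=1..l. int (card (A i))) \<le> int (M k HV HE)"
    using le by (metis of_nat_le_iff of_nat_add of_nat_sum)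
  ultimately show ?thesis unfolding HV_def HE_def by simp
qed

end
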